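(* Let $\boldsymbol{B} = [\boldsymbol{B}[1]\ \cdots\ \boldsymbol{B}[n]]$ be a block dictionary with pairwise disjoint block subspaces $\mathcal{S}_i=\operatorname{span}(\boldsymbol{B}[i])$ of dimensions $d_i$, and let $k\ge 1$. For each $i$ let $\bar{\boldsymbol{B}}[i]\in\mathbb{R}^{D\times d_i}$ be an arbitrary full column-rank submatrix of $\boldsymbol{B}[i]$, and set $\bar{\boldsymbol{B}} = [\bar{\boldsymbol{B}}[1]\ \cdots\ \bar{\boldsymbol{B}}[n]]$. Then every signal $\boldsymbol{y}\in\mathbb{R}^D$ that admits a $k$-block-sparse representation admits a unique one (i.e. the blocks $\{i_l\}$ and the vectors $\{\boldsymbol{s}_{i_l}\}$ generating a $k$-block-sparse representation are uniquely determined) if and only if $\bar{\boldsymbol{B}}\bar{\boldsymbol{c}}\neq\boldsymbol{0}$ for every nonzero $2k$-block-sparse vector $\bar{\boldsymbol{c}}$.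
   Context: $\boldsymbol{B}\in\mathbb{R}^{D\times N}$ has unit-Euclidean-norm columns and blocks $\boldsymbol{B}[i]\in\mathbb{R}^{D\times m_i}$ (possibly with linearly dependent columns); $\mathcal{S}_i$ is the column span of $\boldsymbol{B}[i]$, $d_i=\dim\mathcal{S}_i$, and $\mathcal{S}_i\cap\mathcal{S}_j=\{0\}$ for $i\ne j$. A vector $\bar{\boldsymbol{c}}=(\bar{\boldsymbol{c}}[1];\dots;\bar{\boldsymbol{c}}[n])$ with $\bar{\boldsymbol{c}}[i]\in\mathbb{R}^{d_i}$ is $2k$-block-sparse if at most $2k$ of its blocks $\bar{\boldsymbol{c}}[i]$ are nonzero. A $k$-block-sparse representation of $\boldsymbol{y}$ is an expression $\boldsymbol{y}=\sum_{i\in\Lambda}\boldsymbol{s}_i$ with $\Lambda\subseteq\{1,\dots,n\}$, $|\Lambda|\le k$, $\boldsymbol{s}_i\in\mathcal{S}_i\setminus\{0\}$; it is unique if any two such expressions have the same $\Lambda$ and the same vectors $\boldsymbol{s}_i$. *)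

theory Defs
  imports "HOL-Analysis.Analysis"
begin

text \<open>A block dictionary with n blocks: block i (i < n) has columns B i j for j < m i,
  vectors in R^D (type real^'d).\<close>

definition block_subspace :: "(nat \<Rightarrow> nat \<Rightarrow> real^'d) \<Rightarrow> (nat \<Rightarrow> nat) \<Rightarrow> nat \<Rightarrow> (real^'d) set" where
  "block_subspace B m i = span {B i j | j. j < m i}"

definition is_kbs_rep :: "(nat \<Rightarrow> nat \<Rightarrow> real^'d) \<Rightarrow> (nat \<Rightarrow> nat) \<Rightarrow> nat \<Rightarrow> nat \<Rightarrow> real^'d
    \<Rightarrow> nat set \<Rightarrow> (nat \<Rightarrow> real^'d) \<Rightarrow> bool" where
  "is_kbs_rep B m n k y Lam s \<longleftrightarrow>
     Lam \<subseteq> {..<n} \<and> card Lam \<le> k \<and>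
     (\<forall>i\<in>Lam. s i \<in> block_subspace B m i \<and> s i \<noteq> 0) \<and>
     y = (\<Sum>i\<in>Lam. s i)"

definition has_kbs_rep where
  "has_kbs_rep B m n k y \<longleftrightarrow> (\<exists>Lam s. is_kbs_rep B m n k y Lam s)"

definition unique_kbs_rep where
  "unique_kbs_rep B m n k y \<longleftrightarrow>
     (\<forall>Lam s Lam' s'. is_kbs_rep B m n k y Lam s \<and> is_kbs_rep B m n k y Lam' s'
        \<longrightarrow> Lam = Lam' \<and> (\<forall>i\<in>Lam. s i = s' i))"

text \<open>J i selects the columns of the submatrix Bbar[i] of B[i]; c i j (j \<in> J i) are the
  entries of block cbar[i].\<close>
definition block_support :: "nat \<Rightarrow> (nat \<Rightarrow> nat set) \<Rightarrow> (nat \<Rightarrow> nat \<Rightarrow> real) \<Rightarrow> nat set" where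
  "block_support n J c = {i. i < n \<and> (\<exists>j\<in>J i. c i j \<noteq> 0)}"

definition reduced_apply :: "(nat \<Rightarrow> nat \<Rightarrow> real^'d) \<Rightarrow> nat \<Rightarrow> (nat \<Rightarrow> nat set) \<Rightarrow> (nat \<Rightarrow> nat \<Rightarrow> real) \<Rightarrow> real^'d" where
  "reduced_apply B n J c = (\<Sum>i<n. \<Sum>j\<in>J i. c i j *\<^sub>R B i j)"

end

theory Submission
  imports Defs
begin
lemma blk_basis:
  fixes B :: "nat \<Rightarrow> real^'d"
  assumes "J \<subseteq> {..<mi}" "card J = dim (span {B j | j. j < mi})"
    "inj_on B J" "independent (B ` J)"
  shows "span {B j | j. j < mi} \<subseteq> span (B ` J)"
proof -
  have f: "finite J" using assms(1) finite_subset by blast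
  have sub: "B ` J \<subseteq> span {B j | j. j < mi}" using assms(1) by (auto intro: span_base)
  have "card (B ` J) = dim (span {B j | j. j < mi})" using assms(2,3) card_image by metis
  with card_eq_dim[OF sub this] f assms(4) show ?thesis by simp
qed
lemma blk_coeffs:
  fixes B :: "nat \<Rightarrow> real^'d"
  assumes "J \<subseteq> {..<mi}" "card J = dim (span {B j | j. j < mi})"
    "inj_on B J" "independent (B ` J)" "v \<in> span {B j | j. j < mi}"
  shows "\<exists>a. v = (\<Sum>j\<in>J. a j *\<^sub>R B j)"
proof -
  have f: "finite J" using assms(1) finite_subset by blast
  have "v \<in> span (B ` J)" using blk_basis[OF assms(1-4)] assms(5) by blast
  then obtain u where u: "(\<Sum>w\<in>B ` J. u w *\<^sub>R w) = v"
    using span_finite[of "B ` J"] f by auto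
  have "(\<Sum>w\<in>B ` J. u w *\<^sub>R w) = (\<Sum>j\<in>J. u (B j) *\<^sub>R B j)"
    using sum.reindex[OF assms(3)] by simp
  then show ?thesis using u by metis
qed

lemma blk_indep:
  fixes B :: "nat \<Rightarrow> real^'d"
  assumes "finite J" "inj_on B J" "independent (B ` J)" "(\<Sum>j\<in>J. a j *\<^sub>R B j) = 0"
  shows "\<forall>j\<in>J. a j = 0"
proof (rule ccontr)
  assume "\<not> ?thesis"
  then obtain j0 where j0: "j0 \<in> J" "a j0 \<noteq> 0" by blast
  define u where "u = (\<lambda>w. a (the_inv_into J B w))"
  have "(\<Sum>w\<in>B ` J. u w *\<^sub>R w) = (\<Sum>j\<in>J. u (B j) *\<^sub>R B j)"
    using sum.reindex[OF assms(2)] by simp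
  also have "\<dots> = (\<Sum>j\<in>J. a j *\<^sub>R B j)"
    using the_inv_into_f_f[OF assms(2)] unfolding u_def by simp
  finally have "(\<Sum>w\<in>B ` J. u w *\<^sub>R w) = 0" using assms(4) by simp
  moreover have "u (B j0) \<noteq> 0" using j0 the_inv_into_f_f[OF assms(2)] unfolding u_def by simp
  ultimately have "dependent (B ` J)" using dependent_finite[of "B ` J"] assms(1) j0 by blast
  with assms(3) show False by simp
qed

lemma blk_mem:
  fixes B :: "nat \<Rightarrow> nat \<Rightarrow> real^'d"
  assumes "J i \<subseteq> {..<m i}"
  shows "(\<Sum>j\<in>J i. a j *\<^sub>R B i j) \<in> block_subspace B m i"
  unfolding block_subspace_def
proof (rule span_sum)
  fix j assume "j \<in> J i"
  then have "B i j \<in> span {B i j |j. j < m i}" using assms by (auto intro!: span_base)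
  then show "a j *\<^sub>R B i j \<in> span {B i j |j. j < m i}" by (rule span_scale)
qed

theorem proposition2:
  fixes B :: "nat \<Rightarrow> nat \<Rightarrow> real^'d" and m :: "nat \<Rightarrow> nat" and n k :: nat
    and J :: "nat \<Rightarrow> nat set"
  assumes unit_cols: "\<forall>i<n. \<forall>j<m i. norm (B i j) = 1"
    and disjoint: "\<forall>i<n. \<forall>i'<n. i \<noteq> i' \<longrightarrow> block_subspace B m i \<inter> block_subspace B m i' = {0}"
    and k_pos: "k \<ge> 1"
    and J_sub: "\<forall>i<n. J i \<subseteq> {..<m i}"
    and J_card: "\<forall>i<n. card (J i) = dim (block_subspace B m i)"
    and J_rank: "\<forall>i<n. inj_on (B i) (J i) \<and> independent (B i ` J i)"
  shows "(\<forall>y. has_kbs_rep B m n k y \<longrightarrow> unique_kbs_rep B m n k y) \<longleftrightarrow>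
         (\<forall>c. (\<exists>i<n. \<exists>j\<in>J i. c i j \<noteq> 0) \<and> card (block_support n J c) \<le> 2 * k
              \<longrightarrow> reduced_apply B n J c \<noteq> 0)"
proof
  have finJ: "\<And>i. i < n \<Longrightarrow> finite (J i)" using J_sub finite_subset by blast
  have zero: "\<And>i a. i < n \<Longrightarrow> (\<Sum>j\<in>J i. a j *\<^sub>R B i j) = 0 \<Longrightarrow> \<forall>j\<in>J i. a j = 0"
    using blk_indep finJ J_rank by blast
  have coef: "\<And>i v. i < n \<Longrightarrow> v \<in> block_subspace B m i \<Longrightarrow> \<exists>a. v = (\<Sum>j\<in>J i. a j *\<^sub>R B i j)"
    using blk_coeffs J_sub J_card J_rank unfolding block_subspace_def by blast
  {
    assume L: "\<forall>y. has_kbs_rep B m n k y \<longrightarrow> unique_kbs_rep B m n k y"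
    show "\<forall>c. (\<exists>i<n. \<exists>j\<in>J i. c i j \<noteq> 0) \<and> card (block_support n J c) \<le> 2 * k
              \<longrightarrow> reduced_apply B n J c \<noteq> 0"
    proof (intro allI impI notI)
      fix c assume h: "(\<exists>i<n. \<exists>j\<in>J i. c i j \<noteq> 0) \<and> card (block_support n J c) \<le> 2 * k"
        and r: "reduced_apply B n J c = 0"
      define t where "t i = (\<Sum>j\<in>J i. c i j *\<^sub>R B i j)" for i
      define T where "T = block_support n J c"
      have Tsub: "T \<subseteq> {..<n}" unfolding T_def block_support_def by auto
      have finT: "finite T" using Tsub finite_subset by blast
      have Tne: "T \<noteq> {}" using h unfolding T_def block_support_def by auto
      have tz: "\<And>i. i < n \<Longrightarrow> i \<notin> T \<Longrightarrow> t i = 0" unfolding t_def T_def block_support_def by auto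
      have tnz: "\<And>i. i \<in> T \<Longrightarrow> t i \<noteq> 0"
      proof -
        fix i assume "i \<in> T"
        then have "i < n" "\<exists>j\<in>J i. c i j \<noteq> 0" unfolding T_def block_support_def by auto
        then show "t i \<noteq> 0" using zero[of i "c i"] unfolding t_def by blast
      qed
      have tmem: "\<And>i. i < n \<Longrightarrow> t i \<in> block_subspace B m i" unfolding t_def using J_sub blk_mem by blast
      have "(\<Sum>i<n. t i) = 0" using r unfolding reduced_apply_def t_def by simp
      moreover have "(\<Sum>i<n. t i) = (\<Sum>i\<in>T. t i)"
        by (rule sum.mono_neutral_right) (use Tsub tz in auto)
      ultimately have sumT: "(\<Sum>i\<in>T. t i) = 0" by simp
      have "min k (card T) \<le> card T" by simp
      then obtain L1 where L1: "L1 \<subseteq> T" "card L1 = min k (card T)"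
        using obtain_subset_with_card_n by metis
      have cT: "card T \<ge> 1" using finT Tne by (simp add: Suc_le_eq card_gt_0_iff)
      have L1ne: "L1 \<noteq> {}" using L1 k_pos cT by auto
      define L2 where "L2 = T - L1"
      have finL1: "finite L1" using L1 finT finite_subset by blast
      have cL2: "card L2 \<le> k" unfolding L2_def using card_Diff_subset[OF finL1 L1(1)] L1 h T_def by auto
      have splitT: "(\<Sum>i\<in>T. t i) = (\<Sum>i\<in>L1. t i) + (\<Sum>i\<in>L2. t i)"
        unfolding L2_def using sum.subset_diff[OF L1(1) finT] by (simp add: add.commute)
      define y where "y = (\<Sum>i\<in>L1. t i)"
      have r1: "is_kbs_rep B m n k y L1 t"
        unfolding is_kbs_rep_def y_def using L1 Tsub tmem tnz by auto
      have r2: "is_kbs_rep B m n k y L2 (\<lambda>i. - t i)"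
        unfolding is_kbs_rep_def y_def using cL2 Tsub tmem tnz sumT splitT
        unfolding L2_def block_subspace_def
        by (auto simp: sum_negf intro: span_neg) (metis add.commute add_eq_0_iff)
      have "unique_kbs_rep B m n k y" using L r1 unfolding has_kbs_rep_def by blast
      then have "L1 = L2" using r1 r2 unfolding unique_kbs_rep_def by blast
      then show False using L1ne unfolding L2_def by blast
    qed
  }
  {
    assume R: "\<forall>c. (\<exists>i<n. \<exists>j\<in>J i. c i j \<noteq> 0) \<and> card (block_support n J c) \<le> 2 * k
              \<longrightarrow> reduced_apply B n J c \<noteq> 0"
    show "\<forall>y. has_kbs_rep B m n k y \<longrightarrow> unique_kbs_rep B m n k y"
      unfolding unique_kbs_rep_def
    proof (intro allI impI)
      fix y Lam s Lam' s'
      assume "is_kbs_rep B m n k y Lam s \<and> is_kbs_rep B m n k y Lam' s'"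
      then have A: "Lam \<subseteq> {..<n}" "card Lam \<le> k" "\<forall>i\<in>Lam. s i \<in> block_subspace B m i \<and> s i \<noteq> 0"
        "y = (\<Sum>i\<in>Lam. s i)" and A': "Lam' \<subseteq> {..<n}" "card Lam' \<le> k"
        "\<forall>i\<in>Lam'. s' i \<in> block_subspace B m i \<and> s' i \<noteq> 0" "y = (\<Sum>i\<in>Lam'. s' i)"
        unfolding is_kbs_rep_def by auto
      define t where "t i = (if i \<in> Lam then s i else 0) - (if i \<in> Lam' then s' i else 0)" for i
      have tmem: "\<And>i. i < n \<Longrightarrow> t i \<in> block_subspace B m i"
        unfolding t_def block_subspace_def using A(3) A'(3) unfolding block_subspace_def
        by (auto intro: span_diff span_zero span_neg)
      define c where "c i = (if i < n then (SOME a. t i = (\<Sum>j\<in>J i. a j *\<^sub>R B i j)) else (\<lambda>_. 0))" for i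
      have ct: "\<And>i. i < n \<Longrightarrow> t i = (\<Sum>j\<in>J i. c i j *\<^sub>R B i j)"
      proof -
        fix i assume i: "i < n"
        show "t i = (\<Sum>j\<in>J i. c i j *\<^sub>R B i j)"
          unfolding c_def using i someI_ex[OF coef[OF i tmem[OF i]]] by simp
      qed
      have "reduced_apply B n J c = (\<Sum>i<n. t i)" unfolding reduced_apply_def using ct by simp
      also have "\<dots> = (\<Sum>i<n. if i \<in> Lam then s i else 0) - (\<Sum>i<n. if i \<in> Lam' then s' i else 0)"
        unfolding t_def by (simp add: sum_subtractf)
      also have "\<dots> = (\<Sum>i\<in>Lam. s i) - (\<Sum>i\<in>Lam'. s' i)"
        proof -
          have "{..<n} \<inter> Lam = Lam" "{..<n} \<inter> Lam' = Lam'" using A(1) A'(1) by auto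
          then show ?thesis by (simp add: sum.inter_restrict[symmetric])
        qed
      also have "\<dots> = 0" using A(4) A'(4) by simp
      finally have r0: "reduced_apply B n J c = 0" .
      have bs: "block_support n J c \<subseteq> Lam \<union> Lam'"
      proof
        fix i assume "i \<in> block_support n J c"
        then have i: "i < n" "\<exists>j\<in>J i. c i j \<noteq> 0" unfolding block_support_def by auto
        show "i \<in> Lam \<union> Lam'"
        proof (rule ccontr)
          assume "i \<notin> Lam \<union> Lam'"
          then have "t i = 0" unfolding t_def by simp
          then show False using zero[OF i(1), of "c i"] ct[OF i(1)] i(2) by simp
        qed
      qed
      have finU: "finite (Lam \<union> Lam')" using A(1) A'(1) finite_subset by blast
      have "card (block_support n J c) \<le> card (Lam \<union> Lam')" using card_mono[OF finU bs] .
      also have "\<dots> \<le> card Lam + card Lam'" by (rule card_Un_le)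
      finally have "card (block_support n J c) \<le> 2 * k" using A(2) A'(2) by simp
      with R r0 have "\<not> (\<exists>i<n. \<exists>j\<in>J i. c i j \<noteq> 0)" by blast
      then have t0: "\<And>i. i < n \<Longrightarrow> t i = 0" using ct by simp
      have "Lam = Lam'"
      proof
        show "Lam \<subseteq> Lam'"
        proof
          fix i assume i: "i \<in> Lam"
          show "i \<in> Lam'"
          proof (rule ccontr)
            assume "i \<notin> Lam'"
            then have "t i = s i" unfolding t_def using i by simp
            then show False using t0[of i] A(1) A(3) i by auto
          qed
        qed
        show "Lam' \<subseteq> Lam"
        proof
          fix i assume i: "i \<in> Lam'"
          show "i \<in> Lam"
          proof (rule ccontr)
            assume "i \<notin> Lam"
            then have "t i = - s' i" unfolding t_def using i by simp
            then show False using t0[of i] A'(1) A'(3) i by auto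
          qed
        qed
      qed
      moreover have "\<forall>i\<in>Lam. s i = s' i"
      proof
        fix i assume i: "i \<in> Lam"
        then have "t i = 0" using t0 A(1) by auto
        then show "s i = s' i" unfolding t_def using i \<open>Lam = Lam'\<close> by simp
      qed
      ultimately show "Lam = Lam' \<and> (\<forall>i\<in>Lam. s i = s' i)" by simp
    qed
  }
qed

end
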